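(* Let $L$ be a multiplicative lattice and $q$ a proper element of $L$. Then $\sqrt{q}$, $Nil(L)$ and $Jac(L)$ are quasi $n$-absorbing elements of $L$ for all $n\ge2$.
   Context: A multiplicative lattice is a complete lattice $L$ with least element $0$ and compact greatest element $1$, equipped with a commutative, associative product that distributes over arbitrary joins and has $1$ as multiplicative identity. An element $a$ is compact if $a\le\bigvee_{\alpha\in I}a_\alpha$ implies $a\le\bigvee_{\alpha\in I_0}a_\alpha$ for some finite $I_0\subseteq I$; $L_*$ denotes the set of compact elements. A proper element $p$ ($p<1$) is prime if $ab\le p$ with $a,b\in L$ implies $a\le p$ or $b\le p$; a proper element $m$ is maximal if $m<x\le1$ implies $x=1$. For $a\in L$, $\sqrt{a}=\bigwedge\{p: p \text{ prime}, a\le p\}$; $Nil(L)=\sqrt{0}$; $Jac(L)=\bigwedge\{m: m \text{ maximal}\}$. A proper element $q$ is quasi $n$-absorbing if whenever $a^nb\le q$ for some $a,b\in L_*$, then $a^n\le q$ or $a^{n-1}b\le q$. *)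

theory Defs
  imports Main
begin

text \<open>A multiplicative lattice: a complete lattice (type class; bot = 0, top = 1)
  with a product operation mult.\<close>

definition compact_elem :: "'a::complete_lattice \<Rightarrow> bool" where
  "compact_elem a \<longleftrightarrow> (\<forall>S. a \<le> Sup S \<longrightarrow> (\<exists>T\<subseteq>S. finite T \<and> a \<le> Sup T))"

definition mult_lattice :: "('a::complete_lattice \<Rightarrow> 'a \<Rightarrow> 'a) \<Rightarrow> bool" where
  "mult_lattice mult \<longleftrightarrow>
     compact_elem (top::'a) \<and>
     (\<forall>a b. mult a b = mult b a) \<and>
     (\<forall>a b c. mult (mult a b) c = mult a (mult b c)) \<and>
     (\<forall>a S. mult a (Sup S) = Sup (mult a ` S)) \<and>
     (\<forall>a. mult top a = a)"

primrec mpow :: "('a::complete_lattice \<Rightarrow> 'a \<Rightarrow> 'a) \<Rightarrow> 'a \<Rightarrow> nat \<Rightarrow> 'a" where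
  "mpow mult a 0 = top"
| "mpow mult a (Suc n) = mult a (mpow mult a n)"

definition prime_elem_ml :: "('a::complete_lattice \<Rightarrow> 'a \<Rightarrow> 'a) \<Rightarrow> 'a \<Rightarrow> bool" where
  "prime_elem_ml mult p \<longleftrightarrow> p < top \<and> (\<forall>a b. mult a b \<le> p \<longrightarrow> a \<le> p \<or> b \<le> p)"

definition maximal_elem_ml :: "'a::complete_lattice \<Rightarrow> bool" where
  "maximal_elem_ml m \<longleftrightarrow> m < top \<and> (\<forall>x. m < x \<longrightarrow> x = top)"

definition rad_ml :: "('a::complete_lattice \<Rightarrow> 'a \<Rightarrow> 'a) \<Rightarrow> 'a \<Rightarrow> 'a" where
  "rad_ml mult a = Inf {p. prime_elem_ml mult p \<and> a \<le> p}"

definition Nil_ml :: "('a::complete_lattice \<Rightarrow> 'a \<Rightarrow> 'a) \<Rightarrow> 'a" where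
  "Nil_ml mult = rad_ml mult bot"

definition Jac_ml :: "'a::complete_lattice" where
  "Jac_ml = Inf {m. maximal_elem_ml m}"

definition quasi_n_absorbing :: "('a::complete_lattice \<Rightarrow> 'a \<Rightarrow> 'a) \<Rightarrow> nat \<Rightarrow> 'a \<Rightarrow> bool" where
  "quasi_n_absorbing mult n q \<longleftrightarrow> q < top \<and>
     (\<forall>a b. compact_elem a \<and> compact_elem b \<and> mult (mpow mult a n) b \<le> q \<longrightarrow>
        mpow mult a n \<le> q \<or> mult (mpow mult a (n - 1)) b \<le> q)"

end

theory Submission
  imports Defs
begin

lemma ml_mono:
  assumes "mult_lattice mult" "a \<le> b"
  shows "mult c a \<le> mult c b"
proof -
  have "mult c (Sup {a,b}) = Sup (mult c ` {a,b})"
    using assms(1) unfolding mult_lattice_def by blast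
  moreover have "Sup {a,b} = b" using assms(2) by (simp add: sup_absorb2)
  ultimately have "mult c b = sup (mult c a) (mult c b)" by simp
  thus ?thesis by (metis sup.cobounded1)
qed

lemma ml_le_right:
  assumes "mult_lattice mult" shows "mult x y \<le> y"
proof -
  have "mult x y \<le> mult top y" by (metis assms ml_mono top_greatest mult_lattice_def)
  thus ?thesis using assms unfolding mult_lattice_def by simp
qed

lemma ml_le_left:
  assumes "mult_lattice mult" shows "mult x y \<le> x"
  by (metis assms ml_le_right mult_lattice_def)

lemma mpow_le:
  assumes "mult_lattice mult" "k \<ge> 1" shows "mpow mult a k \<le> a"
  using assms(2) by (cases k) (auto simp: ml_le_left[OF assms(1)])

lemma finite_chain_Sup:
  fixes F :: "'a::complete_lattice set"
  assumes "finite F" "F \<noteq> {}" "\<forall>x\<in>F. \<forall>y\<in>F. x \<le> y \<or> y \<le> x"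
  shows "Sup F \<in> F"
  using assms
proof (induction F rule: finite_ne_induct)
  case (singleton x) then show ?case by simp
next
  case (insert x F)
  then have "Sup F \<in> F" by blast
  then have "x \<le> Sup F \<or> Sup F \<le> x" using insert.prems by blast
  then show ?case using \<open>Sup F \<in> F\<close>
    by (auto simp: sup_absorb1 sup_absorb2)
qed

lemma exists_max:
  fixes q :: "'a::complete_lattice"
  assumes "compact_elem (top::'a)" "q < top"
  shows "\<exists>m. maximal_elem_ml m \<and> q \<le> m"
proof -
  define A where "A = {x. q \<le> x \<and> x < (top::'a)}"
  have po: "partial_order_on A (relation_of (\<le>) A)"
    by (rule partial_order_on_relation_ofI) auto
  have "\<exists>u\<in>A. \<forall>a\<in>C. a \<le> u" if C: "C \<in> Chains (relation_of (\<le>) A)" for C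
  proof (cases "C = {}")
    case True then show ?thesis using assms(2) unfolding A_def by auto
  next
    case False
    have CA: "C \<subseteq> A" using Chains_relation_of[OF C] .
    have tot: "\<forall>x\<in>C. \<forall>y\<in>C. x \<le> y \<or> y \<le> x"
      using C unfolding Chains_def relation_of_def by blast
    have "Sup C < top"
    proof (rule ccontr)
      assume "\<not> Sup C < top"
      then have "top \<le> Sup C" by (metis less_top order_refl)
      then obtain T where T: "T \<subseteq> C" "finite T" "top \<le> Sup T"
        using assms(1) unfolding compact_elem_def by blast
      show False
      proof (cases "T = {}")
        case True
        then have "top \<le> (bot::'a)" using T(3) by simp
        then have "top \<le> q" using bot_least order_trans by blast
        then show False using assms(2) by (simp add: less_le_not_le)
      next
        case False
        have "Sup T \<in> T" using finite_chain_Sup[OF T(2) False] tot T(1) by blast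
        then have "Sup T \<in> A" using T(1) CA by blast
        then show False using T(3) unfolding A_def by (simp add: top.extremum_unique)
      qed
    qed
    moreover obtain c where "c \<in> C" using False by blast
    then have "q \<le> c" using CA unfolding A_def by blast
    then have "q \<le> Sup C" using Sup_upper[OF \<open>c \<in> C\<close>] by (rule order_trans)
    ultimately show ?thesis unfolding A_def by (auto intro: Sup_upper)
  qed
  from predicate_Zorn[OF po this] obtain m where m: "m \<in> A" "\<forall>a\<in>A. m \<le> a \<longrightarrow> a = m"
    by blast
  have "maximal_elem_ml m"
    unfolding maximal_elem_ml_def
  proof (intro conjI allI impI)
    show "m < top" using m(1) unfolding A_def by blast
    fix x assume "m < x"
    show "x = top"
    proof (rule ccontr)
      assume "x \<noteq> top"
      then have "x \<in> A" using m(1) \<open>m < x\<close> unfolding A_def by (auto simp: less_top)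
      then show False using m(2) \<open>m < x\<close> by auto
    qed
  qed
  then show ?thesis using m(1) unfolding A_def by blast
qed

lemma maximal_prime:
  assumes ml: "mult_lattice mult" and m: "maximal_elem_ml m"
  shows "prime_elem_ml mult m"
  unfolding prime_elem_ml_def
proof (intro conjI allI impI)
  show "m < top" using m maximal_elem_ml_def by blast
  fix a b assume ab: "mult a b \<le> m"
  show "a \<le> m \<or> b \<le> m"
  proof (rule ccontr)
    assume "\<not> (a \<le> m \<or> b \<le> m)"
    then have "m < sup m a" by (metis sup.cobounded1 sup.cobounded2 order.not_eq_order_implies_strict)
    then have 1: "sup m a = top" using m maximal_elem_ml_def by blast
    have "b = mult b top" using ml unfolding mult_lattice_def by metis
    also have "\<dots> = mult b (Sup {m, a})" using 1 by simp
    also have "\<dots> = Sup (mult b ` {m, a})" using ml unfolding mult_lattice_def by blast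
    also have "\<dots> = sup (mult b m) (mult b a)" by simp
    also have "\<dots> \<le> m" using ab ml_le_right[OF ml, of b m]
      by (metis ml mult_lattice_def le_supI)
    finally show False using \<open>\<not> (a \<le> m \<or> b \<le> m)\<close> by blast
  qed
qed

lemma mpow_prime:
  assumes pr: "prime_elem_ml mult p"
  shows "k \<ge> 1 \<Longrightarrow> mpow mult a k \<le> p \<Longrightarrow> a \<le> p"
proof (induction k)
  case 0 then show ?case by simp
next
  case (Suc k)
  have "mult a (mpow mult a k) \<le> p" using Suc.prems by simp
  then have A: "a \<le> p \<or> mpow mult a k \<le> p" using pr unfolding prime_elem_ml_def by blast
  have B: "\<not> mpow mult a 0 \<le> p" using pr unfolding prime_elem_ml_def by (auto simp: top_unique)
  show ?case
  proof (cases k)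
    case 0 then show ?thesis using A B by blast
  next
    case (Suc j) then show ?thesis using A Suc.IH by auto
  qed
qed

lemma Inf_primes_qna:
  assumes ml: "mult_lattice mult" and n: "n \<ge> 2"
    and P: "\<forall>p\<in>S. prime_elem_ml mult p" and ne: "S \<noteq> {}"
  shows "quasi_n_absorbing mult n (Inf S)"
  unfolding quasi_n_absorbing_def
proof (intro conjI allI impI)
  obtain p where "p \<in> S" using ne by blast
  then show "Inf S < top" using P prime_elem_ml_def by (metis Inf_lower order_le_less_trans)
  fix a b assume h: "compact_elem a \<and> compact_elem b \<and> mult (mpow mult a n) b \<le> Inf S"
  have "mult (mpow mult a (n - 1)) b \<le> Inf S"
  proof (rule Inf_greatest)
    fix p assume pS: "p \<in> S"
    have pr: "prime_elem_ml mult p" using P pS by blast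
    have "mult (mpow mult a n) b \<le> p" using h pS by (meson Inf_lower order_trans)
    then have "mpow mult a n \<le> p \<or> b \<le> p" using pr prime_elem_ml_def by blast
    moreover have "1 \<le> n" using n by simp
    ultimately have "a \<le> p \<or> b \<le> p" using mpow_prime[OF pr, of n a] by blast
    then show "mult (mpow mult a (n - 1)) b \<le> p"
    proof
      assume "a \<le> p"
      have "1 \<le> n - 1" using n by simp
      then have "mpow mult a (n-1) \<le> a" by (rule mpow_le[OF ml])
      moreover have "mult (mpow mult a (n - 1)) b \<le> mpow mult a (n-1)" by (rule ml_le_left[OF ml])
      ultimately show ?thesis using \<open>a \<le> p\<close> by (meson order_trans)
    next
      assume "b \<le> p" then show ?thesis using ml_le_right[OF ml] order_trans by blast
    qed
  qed
  then show "mpow mult a n \<le> Inf S \<or> mult (mpow mult a (n - 1)) b \<le> Inf S" by blast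
qed

theorem mainTheorem6:
  fixes mult :: "'a::complete_lattice \<Rightarrow> 'a \<Rightarrow> 'a" and q :: 'a and n :: nat
  assumes "mult_lattice mult"
    and "q < top"
    and "n \<ge> 2"
  shows "quasi_n_absorbing mult n (rad_ml mult q) \<and>
         quasi_n_absorbing mult n (Nil_ml mult) \<and>
         quasi_n_absorbing mult n (Jac_ml :: 'a)"
proof -
  have ct: "compact_elem (top::'a)" using assms(1) mult_lattice_def by blast
  have bt: "(bot::'a) < top" using assms(2) by (metis bot.extremum order_le_less_trans)
  have ex: "\<exists>p. prime_elem_ml mult p \<and> x \<le> p" if "x < top" for x :: 'a
    using exists_max[OF ct that] maximal_prime[OF assms(1)] by blast
  have 1: "quasi_n_absorbing mult n (rad_ml mult q)"
    unfolding rad_ml_def by (rule Inf_primes_qna[OF assms(1) assms(3)]) (use ex[OF assms(2)] in auto)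
  have 2: "quasi_n_absorbing mult n (Nil_ml mult)"
    unfolding Nil_ml_def rad_ml_def by (rule Inf_primes_qna[OF assms(1) assms(3)]) (use ex[OF bt] in auto)
  have 3: "quasi_n_absorbing mult n (Jac_ml :: 'a)"
    unfolding Jac_ml_def by (rule Inf_primes_qna[OF assms(1) assms(3)])
      (use exists_max[OF ct bt] maximal_prime[OF assms(1)] in auto)
  show ?thesis using 1 2 3 by blast
qed

end
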